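(* Let $\phi=\langle X,Q,D,C\rangle$ be a QCSP, let $x_i\in X$ be an existential variable ($Q_{x_i}=\exists$), and let $a\in D_{x_i}$ be such that $\textsl{s-fixable}^\phi(x_i,a)$ holds. Let $\phi'=\langle X,Q,D',C\rangle$ where $D'_{x_i}=\{a\}$ and $D'_{x_j}=D_{x_j}$ for all $j\ne i$. Then $\phi$ is true iff $\phi'$ is true.
   Context: Fix a finite set $\mathbb{D}$. For a finite set $V$ of variables, a $V$-tuple is a map $t:V\to\mathbb{D}$, written $x\mapsto t_x$; a $V$-relation is a set of $V$-tuples. A QCSP is a tuple $\phi=\langle X,Q,D,C\rangle$ where $X=\{x_1,\dots,x_n\}$ is a finite set of variables linearly ordered by index, $Q$ assigns to each $x_i$ a quantifier $Q_{x_i}\in\{\forall,\exists\}$, $D$ assigns to each $x_i$ a domain $D_{x_i}\subseteq\mathbb{D}$, and $C$ is a finite set of constraints, each being a $V$-relation for some $V\subseteq X$. For $V\subseteq X$, $\prod_{x\in V}D_x$ denotes the set of $V$-tuples $t$ with $t_x\in D_x$ for all $x\in V$; for $U\subseteq V$ and a $V$-tuple $t$, $t|_U$ is its restriction to $U$. Let $E=\{x_i:Q_{x_i}=\exists\}$, $A=\{x_i:Q_{x_i}=\forall\}$, $X_j=\{x_i:i\le j\}$ (so $X_0=\emptyset$), $A_j=A\cap X_j$. The set of solutions $\mathrm{sol}^\phi$ is the set of $t\in\prod_{x\in X}D_x$ such that $t|_V\in c$ for every $V$-relation $c\in C$. The QCSP $\phi$ is true if the sentence $Q_{x_1}x_1\in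 D_{x_1}\cdots Q_{x_n}x_n\in D_{x_n}.\ \bigwedge_{c\in C}c(\ldots)$ holds, with bounded quantifiers ranging over the listed domains and each constraint atom for a $V$-relation $c$ holding under assignment $t$ iff $t|_V\in c$. A strategy is a family $s=(s_{x_i})_{x_i\in E}$ of functions $s_{x_i}:\prod_{y\in A_{i-1}}D_y\to D_{x_i}$; its scenarios $\mathrm{sce}^\phi(s)$ are the $t\in\prod_{x\in X}D_x$ with $t_{x_i}=s_{x_i}(t|_{A_{i-1}})$ for every $x_i\in E$; $s$ is winning if $\mathrm{sce}^\phi(s)\subseteq\mathrm{sol}^\phi$; the set of outcomes is $\mathrm{out}^\phi=\bigcup_{s\text{ winning}}\mathrm{sce}^\phi(s)$. Shallow fixability: $\textsl{s-fixable}^\phi(x_i,a)$ iff $\forall t\in\mathrm{out}^\phi.\ \exists t'\in\mathrm{out}^\phi.\ t|_{X_{i-1}}=t'|_{X_{i-1}}\wedge t'_{x_i}=a$. *)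

theory Defs
  imports Main
begin

text \<open>Quantifier-variables are x_1..x_n, represented by the naturals 1..n.
  The finite value set is the finite type 'd.  A V-tuple is a partial map
  with domain exactly V.  A constraint is a pair (V, c) of its scope V and a
  V-relation c.\<close>

datatype quantifier = QAll | QEx

record 'd qcsp =
  nvars :: nat
  quant :: "nat \<Rightarrow> quantifier"
  doms  :: "nat \<Rightarrow> 'd set"
  cons  :: "(nat set \<times> (nat \<rightharpoonup> 'd) set) set"

definition vars :: "'d qcsp \<Rightarrow> nat set" where
  "vars \<phi> = {1..nvars \<phi>}"

definition evars :: "'d qcsp \<Rightarrow> nat set" where
  "evars \<phi> = {x \<in> vars \<phi>. quant \<phi> x = QEx}"

definition avars :: "'d qcsp \<Rightarrow> nat set" where
  "avars \<phi> = {x \<in> vars \<phi>. quant \<phi> x = QAll}"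

definition prefix_vars :: "'d qcsp \<Rightarrow> nat \<Rightarrow> nat set" where
  "prefix_vars \<phi> j = {x \<in> vars \<phi>. x \<le> j}"

definition prefix_avars :: "'d qcsp \<Rightarrow> nat \<Rightarrow> nat set" where
  "prefix_avars \<phi> j = avars \<phi> \<inter> prefix_vars \<phi> j"

definition tuples :: "nat set \<Rightarrow> (nat \<Rightarrow> 'd set) \<Rightarrow> (nat \<rightharpoonup> 'd) set" where
  "tuples V D = {t. dom t = V \<and> (\<forall>x\<in>V. the (t x) \<in> D x)}"

definition wf_qcsp :: "'d qcsp \<Rightarrow> bool" where
  "wf_qcsp \<phi> \<longleftrightarrow> finite (cons \<phi>) \<and>
     (\<forall>(V, c) \<in> cons \<phi>. V \<subseteq> vars \<phi> \<and> (\<forall>t\<in>c. dom t = V))"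

definition satisfies :: "'d qcsp \<Rightarrow> (nat \<rightharpoonup> 'd) \<Rightarrow> bool" where
  "satisfies \<phi> t \<longleftrightarrow> (\<forall>(V, c) \<in> cons \<phi>. t |` V \<in> c)"

definition sol :: "'d qcsp \<Rightarrow> (nat \<rightharpoonup> 'd) set" where
  "sol \<phi> = {t \<in> tuples (vars \<phi>) (doms \<phi>). satisfies \<phi> t}"

text \<open>Truth of the quantified sentence: qeval \<phi> m t evaluates the sentence
  with the last m quantifiers still to be processed (variable
  n - m + 1 is the next one), under the partial assignment t.\<close>
primrec qeval :: "'d qcsp \<Rightarrow> nat \<Rightarrow> (nat \<rightharpoonup> 'd) \<Rightarrow> bool" where
  "qeval \<phi> 0 t = satisfies \<phi> t"
| "qeval \<phi> (Suc m) t =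
     (let i = Suc (nvars \<phi> - Suc m) in
      if quant \<phi> i = QEx
      then (\<exists>a \<in> doms \<phi> i. qeval \<phi> m (t(i \<mapsto> a)))
      else (\<forall>a \<in> doms \<phi> i. qeval \<phi> m (t(i \<mapsto> a))))"

definition qtrue :: "'d qcsp \<Rightarrow> bool" where
  "qtrue \<phi> = qeval \<phi> (nvars \<phi>) Map.empty"

text \<open>A strategy: for every existential x_i, a function from
  \<Prod>_{y\<in>A_{i-1}} D_y to D_{x_i} (values outside that product are irrelevant).\<close>
definition strategy :: "'d qcsp \<Rightarrow> (nat \<Rightarrow> (nat \<rightharpoonup> 'd) \<Rightarrow> 'd) \<Rightarrow> bool" where
  "strategy \<phi> s \<longleftrightarrow> (\<forall>x \<in> evars \<phi>.
      \<forall>u \<in> tuples (prefix_avars \<phi> (x - 1)) (doms \<phi>). s x u \<in> doms \<phi> x)"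

definition sce :: "'d qcsp \<Rightarrow> (nat \<Rightarrow> (nat \<rightharpoonup> 'd) \<Rightarrow> 'd) \<Rightarrow> (nat \<rightharpoonup> 'd) set" where
  "sce \<phi> s = {t \<in> tuples (vars \<phi>) (doms \<phi>).
      \<forall>x \<in> evars \<phi>. t x = Some (s x (t |` prefix_avars \<phi> (x - 1)))}"

definition winning :: "'d qcsp \<Rightarrow> (nat \<Rightarrow> (nat \<rightharpoonup> 'd) \<Rightarrow> 'd) \<Rightarrow> bool" where
  "winning \<phi> s \<longleftrightarrow> strategy \<phi> s \<and> sce \<phi> s \<subseteq> sol \<phi>"

definition out :: "'d qcsp \<Rightarrow> (nat \<rightharpoonup> 'd) set" where
  "out \<phi> = \<Union> {sce \<phi> s | s. winning \<phi> s}"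

definition s_fixable :: "'d qcsp \<Rightarrow> nat \<Rightarrow> 'd \<Rightarrow> bool" where
  "s_fixable \<phi> i a \<longleftrightarrow> (\<forall>t \<in> out \<phi>. \<exists>t' \<in> out \<phi>.
      t |` prefix_vars \<phi> (i - 1) = t' |` prefix_vars \<phi> (i - 1) \<and> t' i = Some a)"

end

theory Submission
  imports Defs
begin


definition good :: "'d qcsp \<Rightarrow> nat \<Rightarrow> (nat \<rightharpoonup> 'd) \<Rightarrow> bool" where
  "good \<phi> k q = qeval \<phi> (nvars \<phi> - k) q"

lemma good_step:
  assumes "k < nvars \<phi>"
  shows "good \<phi> k q = (if quant \<phi> (Suc k) = QEx
     then (\<exists>a\<in>doms \<phi> (Suc k). good \<phi> (Suc k) (q(Suc k \<mapsto> a)))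
     else (\<forall>a\<in>doms \<phi> (Suc k). good \<phi> (Suc k) (q(Suc k \<mapsto> a))))"
proof -
  have e: "nvars \<phi> - k = Suc (nvars \<phi> - Suc k)" using assms by simp
  have i: "Suc (nvars \<phi> - Suc (nvars \<phi> - Suc k)) = Suc k" using assms by simp
  show ?thesis unfolding good_def e by (simp only: qeval.simps Let_def i)
qed

lemma restr_full: "dom v = {1..n} \<Longrightarrow> v |` {1..n} = v"
  by (rule ext) (auto simp: restrict_map_def dest: sym[of "dom v"] simp: set_eq_iff dom_def)

lemma restr_Suc: "v (Suc k) = Some c \<Longrightarrow> (v |` {1..k})(Suc k \<mapsto> c) = v |` {1..Suc k}"
  by (rule ext) (auto simp: restrict_map_def)

definition scen :: "'d qcsp \<Rightarrow> (nat \<Rightarrow> (nat \<rightharpoonup> 'd) \<Rightarrow> 'd) \<Rightarrow> (nat \<rightharpoonup> 'd) \<Rightarrow> (nat \<rightharpoonup> 'd)" where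
 "scen \<phi> s w = (\<lambda>l. if l \<in> vars \<phi> then (if quant \<phi> l = QAll then w l
     else Some (s l (w |` prefix_avars \<phi> (l-1)))) else None)"

lemma scen_restr: "scen \<phi> s w |` prefix_avars \<phi> k = w |` prefix_avars \<phi> k"
  by (rule ext) (auto simp: scen_def restrict_map_def prefix_avars_def avars_def)

lemma scen_sce:
  assumes st: "strategy \<phi> s"
    and w: "\<forall>l\<in>vars \<phi>. quant \<phi> l = QAll \<longrightarrow> w l \<noteq> None \<and> the (w l) \<in> doms \<phi> l"
  shows "scen \<phi> s w \<in> sce \<phi> s"
proof -
  have tu: "w |` prefix_avars \<phi> (l-1) \<in> tuples (prefix_avars \<phi> (l-1)) (doms \<phi>)" for l
    using w by (auto simp: tuples_def prefix_avars_def avars_def)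
  have "scen \<phi> s w \<in> tuples (vars \<phi>) (doms \<phi>)"
  proof -
    have "dom (scen \<phi> s w) = vars \<phi>" using w by (auto simp: scen_def split: if_splits)
    moreover have "the (scen \<phi> s w x) \<in> doms \<phi> x" if x: "x \<in> vars \<phi>" for x
    proof (cases "quant \<phi> x")
      case QEx
      then have "x \<in> evars \<phi>" using x by (simp add: evars_def)
      then show ?thesis using st tu[of x] QEx x by (auto simp: strategy_def scen_def)
    next
      case QAll then show ?thesis using w x by (auto simp: scen_def)
    qed
    ultimately show ?thesis by (simp add: tuples_def)
  qed
  moreover have "\<forall>x\<in>evars \<phi>. scen \<phi> s w x = Some (s x (scen \<phi> s w |` prefix_avars \<phi> (x - 1)))"
  proof
    fix x assume "x \<in> evars \<phi>"
    then show "scen \<phi> s w x = Some (s x (scen \<phi> s w |` prefix_avars \<phi> (x - 1)))"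
      unfolding scen_restr by (simp add: evars_def scen_def)
  qed
  ultimately show ?thesis by (simp add: sce_def)
qed

lemma sce_good_aux:
  assumes win: "winning \<phi> s"
  shows "m = nvars \<phi> - k \<Longrightarrow> v \<in> sce \<phi> s \<Longrightarrow> k \<le> nvars \<phi> \<Longrightarrow> good \<phi> k (v |` {1..k})"
proof (induction m arbitrary: k v)
  case 0
  then have k: "k = nvars \<phi>" by simp
  have "v \<in> sol \<phi>" using win 0 by (auto simp: winning_def)
  moreover have "dom v = {1..nvars \<phi>}" using 0 by (auto simp: sce_def tuples_def vars_def)
  ultimately show ?case using k restr_full[of v "nvars \<phi>"] by (simp add: good_def sol_def)
next
  case (Suc m)
  define n where "n = nvars \<phi>"
  have kn: "k < n" using Suc n_def by simp
  define j where "j = Suc k"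
  have vt: "v \<in> tuples (vars \<phi>) (doms \<phi>)" and ve: "\<forall>x\<in>evars \<phi>. v x = Some (s x (v |` prefix_avars \<phi> (x - 1)))"
    using Suc by (auto simp: sce_def)
  have jv: "j \<in> vars \<phi>" using kn by (simp add: j_def n_def vars_def)
  then obtain c where vc: "v j = Some c" and cd: "c \<in> doms \<phi> j" using vt
    unfolding tuples_def by (metis (mono_tags, lifting) domD mem_Collect_eq option.sel)
  have IH: "\<And>v. v \<in> sce \<phi> s \<Longrightarrow> good \<phi> j (v |` {1..j})"
    using Suc.IH[of j] Suc.prems(1) kn by (simp add: j_def n_def)
  show ?case
  proof (cases "quant \<phi> j")
    case QEx
    have "good \<phi> j ((v |` {1..k})(j \<mapsto> c))" using IH[OF Suc.prems(2)] restr_Suc[of v k c] vc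
      by (simp add: j_def)
    then show ?thesis using good_step[of k \<phi>] kn QEx cd by (auto simp: j_def n_def)
  next
    case QAll
    have "good \<phi> j ((v |` {1..k})(j \<mapsto> b))" if b: "b \<in> doms \<phi> j" for b
    proof -
      define w where "w = v(j \<mapsto> b)"
      have st: "strategy \<phi> s" using win by (simp add: winning_def)
      have wok: "\<forall>l\<in>vars \<phi>. quant \<phi> l = QAll \<longrightarrow> w l \<noteq> None \<and> the (w l) \<in> doms \<phi> l"
        using vt b by (auto simp: w_def tuples_def)
      have sc: "scen \<phi> s w \<in> sce \<phi> s" by (rule scen_sce[OF st wok])
      have eq: "(v |` {1..k})(j \<mapsto> b) = scen \<phi> s w |` {1..j}"
      proof (rule ext)
        fix l
        show "((v |` {1..k})(j \<mapsto> b)) l = (scen \<phi> s w |` {1..j}) l"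
        proof (cases "l \<in> {1..k}")
          case True
          then have lv: "l \<in> vars \<phi>" and lj: "l \<noteq> j" using kn by (auto simp: vars_def n_def j_def)
          show ?thesis
          proof (cases "quant \<phi> l")
            case QEx
            have "w |` prefix_avars \<phi> (l-1) = v |` prefix_avars \<phi> (l-1)"
              using True by (auto simp: w_def restrict_map_def prefix_avars_def prefix_vars_def j_def intro!: ext)
            moreover have "l \<in> evars \<phi>" using lv QEx by (simp add: evars_def)
            ultimately show ?thesis using True ve lv QEx lj by (auto simp: scen_def j_def)
          next
            case QAll then show ?thesis using True lv lj by (auto simp: scen_def w_def j_def)
          qed
        next
          case False
          then show ?thesis using jv QAll by (auto simp: scen_def w_def j_def)
        qed
      qed
      show ?thesis using IH[OF sc] eq by simp
    qed
    then show ?thesis using good_step[of k \<phi>] kn QAll by (auto simp: j_def n_def)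
  qed
qed

lemma sce_good: "winning \<phi> s \<Longrightarrow> v \<in> sce \<phi> s \<Longrightarrow> k \<le> nvars \<phi> \<Longrightarrow> good \<phi> k (v |` {1..k})"
  using sce_good_aux by blast



definition ch :: "'d qcsp \<Rightarrow> (nat \<Rightarrow> 'd) \<Rightarrow> (nat \<rightharpoonup> 'd) \<Rightarrow> nat \<Rightarrow> 'd" where
  "ch \<phi> d p j = (if good \<phi> j (p(j \<mapsto> d j)) then d j
     else if (\<exists>b\<in>doms \<phi> j. good \<phi> j (p(j \<mapsto> b)))
     then (SOME b. b \<in> doms \<phi> j \<and> good \<phi> j (p(j \<mapsto> b))) else d j)"

lemma ch_dom: "d j \<in> doms \<phi> j \<Longrightarrow> ch \<phi> d p j \<in> doms \<phi> j"
  unfolding ch_def using someI_ex[of "\<lambda>b. b \<in> doms \<phi> j \<and> good \<phi> j (p(j \<mapsto> b))"] by auto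

lemma ch_good: "\<exists>b\<in>doms \<phi> j. good \<phi> j (p(j \<mapsto> b)) \<Longrightarrow> good \<phi> j (p(j \<mapsto> ch \<phi> d p j))"
  unfolding ch_def using someI_ex[of "\<lambda>b. b \<in> doms \<phi> j \<and> good \<phi> j (p(j \<mapsto> b))"] by auto

primrec play :: "'d qcsp \<Rightarrow> (nat \<Rightarrow> 'd) \<Rightarrow> (nat \<rightharpoonup> 'd) \<Rightarrow> nat \<Rightarrow> (nat \<rightharpoonup> 'd)" where
  "play \<phi> d u 0 = Map.empty"
| "play \<phi> d u (Suc k) = (play \<phi> d u k)(Suc k \<mapsto> (if quant \<phi> (Suc k) = QAll
      then the (u (Suc k)) else ch \<phi> d (play \<phi> d u k) (Suc k)))"

lemma play_Suc_All: "quant \<phi> (Suc k) = QAll \<Longrightarrow> play \<phi> d u (Suc k) = (play \<phi> d u k)(Suc k \<mapsto> the (u (Suc k)))"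
  by (simp only: play.simps simp_thms if_True)

lemma play_Suc_Ex: "quant \<phi> (Suc k) = QEx \<Longrightarrow> play \<phi> d u (Suc k) = (play \<phi> d u k)(Suc k \<mapsto> ch \<phi> d (play \<phi> d u k) (Suc k))"
  by (simp only: play.simps) simp

declare play.simps(2)[simp del]

definition strat :: "'d qcsp \<Rightarrow> (nat \<Rightarrow> 'd) \<Rightarrow> nat \<Rightarrow> (nat \<rightharpoonup> 'd) \<Rightarrow> 'd" where
  "strat \<phi> d = (\<lambda>x u. the (play \<phi> d u x x))"

lemma play_dom_Suc: "dom (play \<phi> d u (Suc k)) = insert (Suc k) (dom (play \<phi> d u k))"
  by (simp only: play.simps dom_fun_upd) simp

lemma play_dom: "dom (play \<phi> d u k) = {1..k}"
  by (induction k) (auto simp only: play_dom_Suc, auto)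

lemma play_restr: "k' \<le> k \<Longrightarrow> play \<phi> d u k |` {1..k'} = play \<phi> d u k'"
proof (induction k)
  case 0 then show ?case by simp
next
  case (Suc k)
  show ?case
  proof (cases "k' = Suc k")
    case True
    then show ?thesis by (simp only: restr_full[OF play_dom])
  next
    case False
    then have "k' \<le> k" using Suc by simp
    then have "Suc k \<notin> {1..k'}" by simp
    then show ?thesis using Suc.IH \<open>k' \<le> k\<close> by (simp only: play.simps(2) restrict_fun_upd if_False)
  qed
qed

lemma play_at: "1 \<le> l \<Longrightarrow> l \<le> k \<Longrightarrow> play \<phi> d u k l = play \<phi> d u l l"
  using play_restr[of l k \<phi> d u] by (metis atLeastAtMost_iff order_refl restrict_in)

lemma play_cong: "(\<forall>l. 1 \<le> l \<and> l \<le> k \<and> quant \<phi> l = QAll \<longrightarrow> u l = u' l) \<Longrightarrow>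
   play \<phi> d u k = play \<phi> d u' k"
  by (induction k) (auto simp: play.simps(2))

lemma play_good:
  assumes "qtrue \<phi>"
    and "\<forall>l\<in>vars \<phi>. quant \<phi> l = QAll \<longrightarrow> the (u l) \<in> doms \<phi> l"
  shows "k \<le> nvars \<phi> \<Longrightarrow> good \<phi> k (play \<phi> d u k)"
proof (induction k)
  case 0 then show ?case using assms(1) by (simp add: good_def qtrue_def)
next
  case (Suc k)
  then have kn: "k < nvars \<phi>" by simp
  have g: "good \<phi> k (play \<phi> d u k)" using Suc by simp
  show ?case
  proof (cases "quant \<phi> (Suc k)")
    case QEx
    have "\<exists>b\<in>doms \<phi> (Suc k). good \<phi> (Suc k) ((play \<phi> d u k)(Suc k \<mapsto> b))"
      using g good_step[OF kn] QEx by simp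
    then have "good \<phi> (Suc k) ((play \<phi> d u k)(Suc k \<mapsto> ch \<phi> d (play \<phi> d u k) (Suc k)))"
      by (rule ch_good)
    then show ?thesis by (simp only: play_Suc_Ex[OF QEx])
  next
    case QAll
    have "Suc k \<in> vars \<phi>" using kn by (simp add: vars_def)
    then have "the (u (Suc k)) \<in> doms \<phi> (Suc k)" using QAll assms(2) by blast
    moreover have "\<forall>a\<in>doms \<phi> (Suc k). good \<phi> (Suc k) ((play \<phi> d u k)(Suc k \<mapsto> a))"
      using g good_step[OF kn] QAll by simp
    ultimately have "good \<phi> (Suc k) ((play \<phi> d u k)(Suc k \<mapsto> the (u (Suc k))))" by blast
    then show ?thesis by (simp only: play_Suc_All[OF QAll])
  qed
qed

lemma play_val:
  assumes "\<forall>j\<in>vars \<phi>. d j \<in> doms \<phi> j"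
    and "\<forall>l\<in>vars \<phi>. quant \<phi> l = QAll \<longrightarrow> the (u l) \<in> doms \<phi> l"
    and "k \<le> nvars \<phi>" "l \<in> {1..k}"
  shows "the (play \<phi> d u k l) \<in> doms \<phi> l"
proof -
  have lv: "l \<in> vars \<phi>" using assms by (auto simp: vars_def)
  obtain l' where l': "l = Suc l'" using assms(4) by (cases l) auto
  have "play \<phi> d u k l = play \<phi> d u l l" using play_at assms(4) by auto
  moreover have "the (play \<phi> d u l l) \<in> doms \<phi> l"
  proof (cases "quant \<phi> l")
    case QEx
    then show ?thesis using assms(1) lv ch_dom[of d l \<phi>] by (simp add: l' play_Suc_Ex)
  next
    case QAll
    then show ?thesis using assms(2) lv by (simp add: l' play_Suc_All)
  qed
  ultimately show ?thesis by simp
qed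

lemma strat_strategy: "\<forall>j\<in>vars \<phi>. d j \<in> doms \<phi> j \<Longrightarrow> strategy \<phi> (strat \<phi> d)"
  unfolding strategy_def strat_def
proof (intro ballI)
  fix x u assume d: "\<forall>j\<in>vars \<phi>. d j \<in> doms \<phi> j" and x: "x \<in> evars \<phi>"
  then obtain x' where x': "x = Suc x'" by (cases x) (auto simp: evars_def vars_def)
  show "the (play \<phi> d u x x) \<in> doms \<phi> x" using x d ch_dom[of d x \<phi>]
    by (auto simp: x' evars_def play_Suc_Ex)
qed

lemma strat_winning:
  assumes qt: "qtrue \<phi>" and d: "\<forall>j\<in>vars \<phi>. d j \<in> doms \<phi> j"
  shows "winning \<phi> (strat \<phi> d)"
  unfolding winning_def
proof (intro conjI subsetI)
  show "strategy \<phi> (strat \<phi> d)" using strat_strategy[OF d] .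
  fix v assume v: "v \<in> sce \<phi> (strat \<phi> d)"
  have vt: "v \<in> tuples (vars \<phi>) (doms \<phi>)" and
    ve: "\<forall>x\<in>evars \<phi>. v x = Some (strat \<phi> d x (v |` prefix_avars \<phi> (x - 1)))"
    using v by (auto simp: sce_def)
  have pv: "k \<le> nvars \<phi> \<Longrightarrow> play \<phi> d v k = v |` {1..k}" for k
  proof (induction k)
    case 0 then show ?case by simp
  next
    case (Suc k)
    define j where "j = Suc k"
    have jv: "j \<in> vars \<phi>" using Suc by (simp add: vars_def j_def)
    have IH: "play \<phi> d v k = v |` {1..k}" using Suc by simp
    show ?case
    proof (cases "quant \<phi> j")
      case QEx
      then have je: "j \<in> evars \<phi>" using jv by (simp add: evars_def)
      have "play \<phi> d (v |` prefix_avars \<phi> (j - 1)) j = play \<phi> d v j"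
      proof (rule play_cong, intro allI impI)
        fix l assume l: "1 \<le> l \<and> l \<le> j \<and> quant \<phi> l = QAll"
        then have "l \<noteq> j" using QEx by auto
        then have "l \<in> prefix_avars \<phi> (j - 1)" using l jv
          by (auto simp: prefix_avars_def avars_def prefix_vars_def vars_def)
        then show "(v |` prefix_avars \<phi> (j - 1)) l = v l" by simp
      qed
      moreover have pj: "play \<phi> d v j = (play \<phi> d v k)(j \<mapsto> ch \<phi> d (play \<phi> d v k) j)"
        using play_Suc_Ex[OF QEx[unfolded j_def]] by (simp add: j_def)
      ultimately have "v j = Some (ch \<phi> d (play \<phi> d v k) j)" using ve je by (simp add: strat_def)
      then show ?thesis using pj IH restr_Suc[of v k] by (simp add: j_def)
    next
      case QAll
      then obtain c where c: "v j = Some c" using vt jv by (auto simp: tuples_def)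
      have pj: "play \<phi> d v j = (play \<phi> d v k)(j \<mapsto> the (v j))"
        using play_Suc_All[OF QAll[unfolded j_def]] by (simp add: j_def)
      then show ?thesis using c IH restr_Suc[of v k] by (simp add: j_def)
    qed
  qed
  have dv: "dom v = {1..nvars \<phi>}" using vt by (simp add: tuples_def vars_def)
  have "play \<phi> d v (nvars \<phi>) = v" using pv[of "nvars \<phi>"] restr_full[OF dv] by simp
  moreover have "good \<phi> (nvars \<phi>) (play \<phi> d v (nvars \<phi>))"
    by (rule play_good[OF qt]) (use vt in \<open>auto simp: tuples_def\<close>)
  ultimately show "v \<in> sol \<phi>" using vt by (simp add: sol_def good_def)
qed

lemma extend:
  assumes qt: "qtrue \<phi>" and ne: "\<forall>j\<in>vars \<phi>. doms \<phi> j \<noteq> {}"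
    and kn: "k \<le> nvars \<phi>" and p: "p \<in> tuples {1..k} (doms \<phi>)"
    and pg: "\<forall>k'\<le>k. good \<phi> k' (p |` {1..k'})"
  shows "\<exists>T\<in>out \<phi>. T |` {1..k} = p"
proof -
  define d where "d j = (if j \<le> k then the (p j) else (SOME b. b \<in> doms \<phi> j))" for j
  have dd: "\<forall>j\<in>vars \<phi>. d j \<in> doms \<phi> j"
  proof
    fix j assume j: "j \<in> vars \<phi>"
    show "d j \<in> doms \<phi> j"
    proof (cases "j \<le> k")
      case True then show ?thesis using p j by (auto simp: d_def tuples_def vars_def)
    next
      case False then show ?thesis using ne j some_in_eq[of "doms \<phi> j"] by (auto simp: d_def)
    qed
  qed
  define u where "u = (\<lambda>j. Some (d j))"
  have ud: "\<forall>l\<in>vars \<phi>. quant \<phi> l = QAll \<longrightarrow> the (u l) \<in> doms \<phi> l" using dd by (simp add: u_def)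
  have dp: "dom p = {1..k}" using p by (simp add: tuples_def)
  have pk: "k' \<le> k \<Longrightarrow> play \<phi> d u k' = p |` {1..k'}" for k'
  proof (induction k')
    case 0 then show ?case by simp
  next
    case (Suc k')
    define j where "j = Suc k'"
    have "j \<in> dom p" using dp Suc by (simp add: j_def)
    then obtain c where pc: "p j = Some c" by blast
    have dj: "d j = c" using pc Suc by (simp add: d_def j_def)
    have pr: "(p |` {1..k'})(j \<mapsto> c) = p |` {1..j}" using restr_Suc[of p k' c] pc by (simp add: j_def)
    have "good \<phi> j ((p |` {1..k'})(j \<mapsto> d j))" using pg Suc pr dj by (simp add: j_def)
    then have "ch \<phi> d (p |` {1..k'}) j = c" using dj by (simp add: ch_def)
    have IH: "play \<phi> d u k' = p |` {1..k'}" using Suc by simp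
    show ?case
    proof (cases "quant \<phi> (Suc k')")
      case QEx
      then show ?thesis using play_Suc_Ex[OF QEx] IH pr \<open>ch \<phi> d (p |` {1..k'}) j = c\<close> by (simp add: j_def)
    next
      case QAll
      then show ?thesis using play_Suc_All[OF QAll] IH pr dj by (simp add: j_def u_def)
    qed
  qed
  define T where "T = play \<phi> d u (nvars \<phi>)"
  have Tt: "T \<in> tuples (vars \<phi>) (doms \<phi>)"
    using play_dom[of \<phi> d u "nvars \<phi>"] play_val[OF dd ud] unfolding T_def tuples_def vars_def
    by auto
  have Tsce: "T \<in> sce \<phi> (strat \<phi> d)"
    unfolding sce_def
  proof (intro CollectI conjI ballI Tt)
    fix x assume x: "x \<in> evars \<phi>"
    then have x1: "1 \<le> x" "x \<le> nvars \<phi>" and xq: "quant \<phi> x = QEx" by (auto simp: evars_def vars_def)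
    have "play \<phi> d (T |` prefix_avars \<phi> (x - 1)) x = play \<phi> d u x"
    proof (rule play_cong, intro allI impI)
      fix l assume l: "1 \<le> l \<and> l \<le> x \<and> quant \<phi> l = QAll"
      then have "l \<noteq> x" using xq by auto
      then have lA: "l \<in> prefix_avars \<phi> (x - 1)" using l x1
        by (auto simp: prefix_avars_def avars_def prefix_vars_def vars_def)
      have "T l = play \<phi> d u l l" unfolding T_def using l x1 by (intro play_at) auto
      also have "\<dots> = u l" using l by (cases l) (auto simp: u_def play_Suc_All)
      finally show "(T |` prefix_avars \<phi> (x - 1)) l = u l" using lA by simp
    qed
    moreover have "T x = play \<phi> d u x x" using play_at x1 by (simp add: T_def)
    moreover have "play \<phi> d u x x \<noteq> None" using play_dom[of \<phi> d u x] x1 by auto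
    ultimately show "T x = Some (strat \<phi> d x (T |` prefix_avars \<phi> (x - 1)))"
      by (auto simp: strat_def)
  qed
  have "T \<in> out \<phi>" using Tsce strat_winning[OF qt dd] by (auto simp: out_def)
  moreover have "T |` {1..k} = p" using play_restr[OF kn, of \<phi> d u] pk[of k] restr_full[OF dp] by (simp add: T_def)
  ultimately show ?thesis by blast
qed



lemma empty_dom_aux:
  assumes j0: "j0 \<in> vars \<psi>" and e: "doms \<psi> j0 = {}"
    and ne: "\<forall>l. 1 \<le> l \<and> l < j0 \<longrightarrow> doms \<psi> l \<noteq> {}"
  shows "m = j0 - Suc k \<Longrightarrow> k < j0 \<Longrightarrow> good \<psi> k q \<longleftrightarrow> quant \<psi> j0 = QAll"
proof (induction m arbitrary: k q)
  case 0
  then have kj: "Suc k = j0" by simp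
  have kn: "k < nvars \<psi>" using j0 kj by (auto simp: vars_def)
  show ?case using good_step[OF kn, of q] e kj by (cases "quant \<psi> j0") auto
next
  case (Suc m)
  then have kj: "Suc k < j0" by simp
  have kn: "k < nvars \<psi>" using j0 kj by (auto simp: vars_def)
  have IH: "\<And>q. good \<psi> (Suc k) q \<longleftrightarrow> quant \<psi> j0 = QAll" using Suc kj by simp
  have "doms \<psi> (Suc k) \<noteq> {}" using ne kj by simp
  then show ?case using good_step[OF kn, of q] IH by auto
qed

lemma empty_dom:
  assumes j0: "j0 \<in> vars \<psi>" and e: "doms \<psi> j0 = {}"
    and ne: "\<forall>l. 1 \<le> l \<and> l < j0 \<longrightarrow> doms \<psi> l \<noteq> {}"
  shows "qtrue \<psi> \<longleftrightarrow> quant \<psi> j0 = QAll"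
proof -
  have "0 < j0" using j0 by (simp add: vars_def)
  then show ?thesis using empty_dom_aux[OF assms, of "j0 - 1" 0 Map.empty]
    by (simp add: good_def qtrue_def)
qed

locale twin =
  fixes \<phi> \<psi> :: "'d qcsp" and i :: nat and a :: 'd
  assumes nv: "nvars \<psi> = nvars \<phi>" and qq: "quant \<psi> = quant \<phi>" and cc: "cons \<psi> = cons \<phi>"
    and dj: "\<And>j. j \<noteq> i \<Longrightarrow> doms \<psi> j = doms \<phi> j" and di: "doms \<psi> i = {a}"
begin

lemma sat_eq: "satisfies \<psi> t = satisfies \<phi> t"
  by (simp add: satisfies_def cc)

lemma qeval_Suc':
  "qeval \<psi> (Suc m) q = (let l = Suc (nvars \<phi> - Suc m) in if quant \<phi> l = QEx
     then (\<exists>b\<in>doms \<psi> l. qeval \<psi> m (q(l \<mapsto> b))) else (\<forall>b\<in>doms \<psi> l. qeval \<psi> m (q(l \<mapsto> b))))"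
  by (simp add: nv qq)

lemma back_dir:
  assumes "a \<in> doms \<phi> i" "quant \<phi> i = QEx"
  shows "qeval \<psi> m q \<Longrightarrow> qeval \<phi> m q"
proof (induction m arbitrary: q)
  case 0 then show ?case by (simp add: sat_eq)
next
  case (Suc m)
  define l where "l = Suc (nvars \<phi> - Suc m)"
  have h: "if quant \<phi> l = QEx then (\<exists>b\<in>doms \<psi> l. qeval \<psi> m (q(l \<mapsto> b))) else (\<forall>b\<in>doms \<psi> l. qeval \<psi> m (q(l \<mapsto> b)))"
    using Suc.prems qeval_Suc'[of m q] by (simp add: Let_def l_def)
  have "if quant \<phi> l = QEx then (\<exists>b\<in>doms \<phi> l. qeval \<phi> m (q(l \<mapsto> b))) else (\<forall>b\<in>doms \<phi> l. qeval \<phi> m (q(l \<mapsto> b)))"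
  proof (cases "l = i")
    case True
    then show ?thesis using h Suc.IH assms di by auto
  next
    case False
    then show ?thesis using h Suc.IH dj[OF False] by (auto split: if_splits)
  qed
  then show ?case unfolding l_def by (simp add: Let_def)
qed

lemma fwd_high:
  shows "m \<le> nvars \<phi> - i \<Longrightarrow> q i = Some a \<Longrightarrow> qeval \<phi> m q \<Longrightarrow> qeval \<psi> m q"
proof (induction m arbitrary: q)
  case 0 then show ?case by (simp add: sat_eq)
next
  case (Suc m)
  define l where "l = Suc (nvars \<phi> - Suc m)"
  have li: "l \<noteq> i" using Suc.prems(1) by (simp add: l_def)
  have IH: "\<And>b. qeval \<phi> m (q(l \<mapsto> b)) \<Longrightarrow> qeval \<psi> m (q(l \<mapsto> b))"
    using Suc.IH Suc.prems li by simp
  have h: "if quant \<phi> l = QEx then (\<exists>b\<in>doms \<phi> l. qeval \<phi> m (q(l \<mapsto> b))) else (\<forall>b\<in>doms \<phi> l. qeval \<phi> m (q(l \<mapsto> b)))"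
    using Suc.prems(3) by (simp add: Let_def l_def)
  have "if quant \<phi> l = QEx then (\<exists>b\<in>doms \<psi> l. qeval \<psi> m (q(l \<mapsto> b))) else (\<forall>b\<in>doms \<psi> l. qeval \<psi> m (q(l \<mapsto> b)))"
    using h IH dj[OF li] by (auto split: if_splits)
  then show ?case unfolding l_def by (subst qeval_Suc') (simp add: Let_def)
qed

lemma good_eq: "good \<psi> k q = qeval \<psi> (nvars \<phi> - k) q"
  by (simp add: good_def nv)

end

definition R :: "'d qcsp \<Rightarrow> nat \<Rightarrow> (nat \<rightharpoonup> 'd) \<Rightarrow> bool" where
  "R \<phi> k q \<longleftrightarrow> q \<in> tuples {1..k} (doms \<phi>) \<and> (\<forall>k'\<le>k. good \<phi> k' (q |` {1..k'}))"

lemma R_upd: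
  assumes "R \<phi> k q" "b \<in> doms \<phi> (Suc k)" "good \<phi> (Suc k) (q(Suc k \<mapsto> b))"
  shows "R \<phi> (Suc k) (q(Suc k \<mapsto> b))"
proof -
  have dq: "dom q = {1..k}" using assms(1) by (simp add: R_def tuples_def)
  have t: "q(Suc k \<mapsto> b) \<in> tuples {1..Suc k} (doms \<phi>)"
    using assms(1,2) by (auto simp: R_def tuples_def)
  have "good \<phi> k' (q(Suc k \<mapsto> b) |` {1..k'})" if k': "k' \<le> Suc k" for k'
  proof (cases "k' = Suc k")
    case True
    have "dom (q(Suc k \<mapsto> b)) = {1..Suc k}" using t by (simp add: tuples_def)
    then show ?thesis using True assms(3) restr_full by metis
  next
    case False
    then have "k' \<le> k" using k' by simp
    then have "q(Suc k \<mapsto> b) |` {1..k'} = q |` {1..k'}" by (simp add: restrict_fun_upd)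
    then show ?thesis using assms(1) \<open>k' \<le> k\<close> by (simp add: R_def)
  qed
  then show ?thesis using t by (simp add: R_def)
qed

context twin begin

lemma fwd_low:
  assumes qt: "qtrue \<phi>" and ne: "\<forall>j\<in>vars \<phi>. doms \<phi> j \<noteq> {}"
    and iv: "i \<in> vars \<phi>" and iq: "quant \<phi> i = QEx" and sf: "s_fixable \<phi> i a"
  shows "m = i - Suc k \<Longrightarrow> k < i \<Longrightarrow> R \<phi> k q \<Longrightarrow> good \<psi> k q"
proof (induction m arbitrary: k q)
  case 0
  then have ki: "Suc k = i" by simp
  have kn: "k < nvars \<phi>" using iv ki by (simp add: vars_def)
  have qt': "q \<in> tuples {1..k} (doms \<phi>)" and qg: "\<forall>k'\<le>k. good \<phi> k' (q |` {1..k'})"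
    using 0 by (auto simp: R_def)
  obtain T where T: "T \<in> out \<phi>" "T |` {1..k} = q"
    using extend[OF qt ne _ qt' qg] kn by auto
  obtain t' where t': "t' \<in> out \<phi>" "T |` prefix_vars \<phi> (i - 1) = t' |` prefix_vars \<phi> (i - 1)"
    "t' i = Some a"
    using sf T(1) unfolding s_fixable_def by blast
  have pv: "prefix_vars \<phi> (i - 1) = {1..k}" using ki kn by (auto simp: prefix_vars_def vars_def)
  obtain s where s: "winning \<phi> s" "t' \<in> sce \<phi> s" using t'(1) by (auto simp: out_def)
  have "good \<phi> i (t' |` {1..i})" using sce_good[OF s] iv by (simp add: vars_def)
  moreover have "t' |` {1..i} = q(i \<mapsto> a)"
    using restr_Suc[of t' k a] t'(3) t'(2) T(2) pv ki by simp
  ultimately have g: "qeval \<phi> (nvars \<phi> - i) (q(i \<mapsto> a))" by (simp add: good_def)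
  have "qeval \<psi> (nvars \<phi> - i) (q(i \<mapsto> a))"
    by (rule fwd_high[OF _ _ g]) auto
  then have "good \<psi> (Suc k) (q(Suc k \<mapsto> a))" using ki by (simp add: good_eq)
  then show ?case using good_step[of k \<psi> q] kn ki iq by (simp add: nv qq di)
next
  case (Suc m)
  then have ki: "Suc k < i" by simp
  have kn: "k < nvars \<phi>" using iv ki by (simp add: vars_def)
  have IH: "\<And>q. R \<phi> (Suc k) q \<Longrightarrow> good \<psi> (Suc k) q"
    using Suc.IH Suc.prems ki by simp
  have dq: "dom q = {1..k}" using Suc.prems(3) by (simp add: R_def tuples_def)
  have gq: "good \<phi> k q" using Suc.prems(3) restr_full[OF dq] unfolding R_def by (metis order_refl)
  have ski: "Suc k \<noteq> i" using ki by simp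
  have gs: "good \<psi> k q = (if quant \<phi> (Suc k) = QEx
     then (\<exists>b\<in>doms \<phi> (Suc k). good \<psi> (Suc k) (q(Suc k \<mapsto> b)))
     else (\<forall>b\<in>doms \<phi> (Suc k). good \<psi> (Suc k) (q(Suc k \<mapsto> b))))"
    using good_step[of k \<psi> q] kn by (simp add: nv qq dj[OF ski])
  show ?case
  proof (cases "quant \<phi> (Suc k)")
    case QEx
    then obtain b where b: "b \<in> doms \<phi> (Suc k)" "good \<phi> (Suc k) (q(Suc k \<mapsto> b))"
      using gq good_step[OF kn] by auto
    have "good \<psi> (Suc k) (q(Suc k \<mapsto> b))"
      using IH R_upd[OF Suc.prems(3) b] by simp
    then show ?thesis using gs QEx b(1) by auto
  next
    case QAll
    have "\<forall>b\<in>doms \<phi> (Suc k). good \<psi> (Suc k) (q(Suc k \<mapsto> b))"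
      using IH R_upd[OF Suc.prems(3)] gq good_step[OF kn] QAll by auto
    then show ?thesis using gs QAll by auto
  qed
qed

end

theorem proposition7:
  fixes \<phi> :: "('d::finite) qcsp" and i :: nat and a :: 'd
  assumes "wf_qcsp \<phi>"
    and "i \<in> vars \<phi>"
    and "quant \<phi> i = QEx"
    and "a \<in> doms \<phi> i"
    and "s_fixable \<phi> i a"
  shows "qtrue \<phi> \<longleftrightarrow> qtrue (\<phi>\<lparr>doms := (doms \<phi>)(i := {a})\<rparr>)"
proof -
  interpret T: twin \<phi> "\<phi>\<lparr>doms := (doms \<phi>)(i := {a})\<rparr>" i a
    by unfold_locales auto
  show ?thesis
proof
  assume "qtrue (\<phi>\<lparr>doms := (doms \<phi>)(i := {a})\<rparr>)"
  then show "qtrue \<phi>" using T.back_dir[OF assms(4,3)] by (simp add: qtrue_def)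
next
  assume qt: "qtrue \<phi>"
  show "qtrue (\<phi>\<lparr>doms := (doms \<phi>)(i := {a})\<rparr>)"
  proof (cases "\<forall>j\<in>vars \<phi>. doms \<phi> j \<noteq> {}")
    case True
    have i0: "0 < i" using assms(2) by (simp add: vars_def)
    have "R \<phi> 0 Map.empty" using qt by (simp add: R_def tuples_def good_def qtrue_def)
    then have "good (\<phi>\<lparr>doms := (doms \<phi>)(i := {a})\<rparr>) 0 Map.empty"
      using T.fwd_low[OF qt True assms(2,3,5), of "i - 1" 0] i0 by simp
    then show ?thesis by (simp add: T.good_eq qtrue_def)
  next
    case False
    define P where "P j \<longleftrightarrow> j \<in> vars \<phi> \<and> doms \<phi> j = {}" for j
    have ex: "\<exists>j. P j" using False by (auto simp: P_def)
    define j0 where "j0 = (LEAST j. P j)"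
    have Pj0: "P j0" using LeastI_ex[OF ex] by (simp add: j0_def)
    have nl: "\<forall>l. 1 \<le> l \<and> l < j0 \<longrightarrow> doms \<phi> l \<noteq> {}"
    proof (intro allI impI)
      fix l assume l: "1 \<le> l \<and> l < j0"
      then have "\<not> P l" using not_less_Least by (auto simp: j0_def)
      moreover have "l \<in> vars \<phi>" using l Pj0 by (auto simp: P_def vars_def)
      ultimately show "doms \<phi> l \<noteq> {}" by (simp add: P_def)
    qed
    have j0i: "j0 \<noteq> i" using Pj0 assms(4) by (auto simp: P_def)
    have "quant \<phi> j0 = QAll" using empty_dom[of j0 \<phi>] Pj0 nl qt by (simp add: P_def)
    moreover have "qtrue (\<phi>\<lparr>doms := (doms \<phi>)(i := {a})\<rparr>) \<longleftrightarrow> quant \<phi> j0 = QAll"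
      using empty_dom[of j0 "\<phi>\<lparr>doms := (doms \<phi>)(i := {a})\<rparr>"] Pj0 nl j0i
      by (simp add: P_def vars_def)
    ultimately show ?thesis by simp
  qed
qed
qed

end
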